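(* Let $\mathcal{A}$ be a Desargues affine plane, let $O\neq I$ be points, and let $\varphi$ be a translation of $\mathcal{A}$. Equip $\ell^{OI}$ with the skew field structure with zero $O$ and unit $I$, and the line $\varphi(\ell^{OI})$ with the skew field structure with zero $\varphi(O)$ and unit $\varphi(I)$. Then for all $A,B,C\in\ell^{OI}$ with $B\neq C$, \[ \varphi(r(A,B;C))=r(\varphi(A),\varphi(B);\varphi(C)), \] where the ratio on the left is computed in $\ell^{OI}$ and the ratio on the right in $\varphi(\ell^{OI})$.
   Context: A Desargues affine plane is an incidence structure of points and lines in which any two distinct points lie on exactly one line, through a point not on a line $\ell$ there is exactly one line disjoint from $\ell$ (Playfair), there exist three non-collinear points, and Desargues' axiom holds: if $A,B,C,A',B',C'$ are points such that the pairwise distinct lines $AA',BB',CC'$ are either all parallel or all pass through one point, and $AB\parallel A'B'$, $BC\parallel B'C'$ (with $AB\neq A'B'$, $BC\neq B'C'$, $A\ne C$, $A'\ne C'$), then $AC\parallel A'C'$. Skew field on a line: for distinct points $O,I$ and points $A,B$ on the line $\ell^{OI}$, addition is defined by: choose a point $B_1\notin\ell^{OI}$; let $P_1$ be the intersection of the line through $B_1$ parallel to $\ell^{OI}$ with the line through $A$ parallel to $OB_1$; then $A+B$ is the intersection of $\ell^{OI}$ with the line through $P_1$ parallel to $BB_1$. Multiplication is defined by: choose $B_1\notin\ell^{OI}$; let $P_1$ be the intersection of the line through $A$ parallel to $IB_1$ with the line $OB_1$; then $A\cdot B$ is the intersection of $\ell^{OI}$ with the line through $P_1$ parallel to $BB_1$.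 These operations do not depend on the choice of $B_1$ and make $(\ell^{OI},+,\cdot)$ a skew field with zero $O$ and unit $I$; the same construction applies to any line with any chosen pair of distinct points as zero and unit. $-X$ and $X^{-1}$ denote additive and multiplicative inverses, $X-Y=X+(-Y)$. Ratio of three points on such a line: $r(A,B;C)=(B-C)^{-1}(A-C)$ for $B\neq C$. A dilatation of $\mathcal{A}$ is a collineation $\delta$ such that $\delta(P)\delta(Q)\parallel PQ$ for all points $P\neq Q$. A translation is either the identity or a dilatation with no fixed point. *)

theory Defs
  imports Main
begin

definition line :: "'p set set \<Rightarrow> 'p \<Rightarrow> 'p \<Rightarrow> 'p set" where
  "line L A B = (THE l. l \<in> L \<and> A \<in> l \<and> B \<in> l)"

definition parallel :: "'p set set \<Rightarrow> 'p set \<Rightarrow> 'p set \<Rightarrow> bool" where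
  "parallel L l m \<longleftrightarrow> l \<in> L \<and> m \<in> L \<and> (l = m \<or> l \<inter> m = {})"

definition par_line :: "'p set set \<Rightarrow> 'p \<Rightarrow> 'p set \<Rightarrow> 'p set" where
  "par_line L P l = (THE m. m \<in> L \<and> P \<in> m \<and> parallel L m l)"

definition meet :: "'p set \<Rightarrow> 'p set \<Rightarrow> 'p" where
  "meet l m = (THE X. X \<in> l \<and> X \<in> m)"

definition collinear :: "'p set set \<Rightarrow> 'p \<Rightarrow> 'p \<Rightarrow> 'p \<Rightarrow> bool" where
  "collinear L A B C \<longleftrightarrow> (\<exists>l\<in>L. A \<in> l \<and> B \<in> l \<and> C \<in> l)"

definition desargues_affine_plane :: "'p set set \<Rightarrow> bool" where
  "desargues_affine_plane L \<longleftrightarrow>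
     (\<forall>l\<in>L. \<exists>A B. A \<noteq> B \<and> A \<in> l \<and> B \<in> l) \<and>
     (\<forall>A B. A \<noteq> B \<longrightarrow> (\<exists>!l. l \<in> L \<and> A \<in> l \<and> B \<in> l)) \<and>
     (\<forall>l\<in>L. \<forall>P. P \<notin> l \<longrightarrow> (\<exists>!m. m \<in> L \<and> P \<in> m \<and> m \<inter> l = {})) \<and>
     (\<exists>A B C. \<not> collinear L A B C) \<and>
     (\<forall>A B C A' B' C'.
        A \<noteq> A' \<and> B \<noteq> B' \<and> C \<noteq> C' \<and> A \<noteq> B \<and> A' \<noteq> B' \<and> B \<noteq> C \<and> B' \<noteq> C' \<and>
        A \<noteq> C \<and> A' \<noteq> C' \<and>
        line L A A' \<noteq> line L B B' \<and> line L B B' \<noteq> line L C C' \<and>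
        line L A A' \<noteq> line L C C' \<and>
        ((parallel L (line L A A') (line L B B') \<and> parallel L (line L B B') (line L C C') \<and>
          parallel L (line L A A') (line L C C'))
         \<or> (\<exists>X. X \<in> line L A A' \<and> X \<in> line L B B' \<and> X \<in> line L C C')) \<and>
        parallel L (line L A B) (line L A' B') \<and> parallel L (line L B C) (line L B' C') \<and>
        line L A B \<noteq> line L A' B' \<and> line L B C \<noteq> line L B' C'
        \<longrightarrow> parallel L (line L A C) (line L A' C'))"

text \<open>Skew field operations on the line through Z and U (zero Z, unit U).\<close>
definition add_on :: "'p set set \<Rightarrow> 'p \<Rightarrow> 'p \<Rightarrow> 'p \<Rightarrow> 'p \<Rightarrow> 'p" where
  "add_on L Z U A B =
    (let l = line L Z U; B1 = (SOME B1. B1 \<notin> l);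
         P1 = meet (par_line L B1 l) (par_line L A (line L Z B1))
     in meet l (par_line L P1 (line L B B1)))"

definition mul_on :: "'p set set \<Rightarrow> 'p \<Rightarrow> 'p \<Rightarrow> 'p \<Rightarrow> 'p \<Rightarrow> 'p" where
  "mul_on L Z U A B =
    (let l = line L Z U; B1 = (SOME B1. B1 \<notin> l);
         P1 = meet (par_line L A (line L U B1)) (line L Z B1)
     in meet l (par_line L P1 (line L B B1)))"

definition neg_on :: "'p set set \<Rightarrow> 'p \<Rightarrow> 'p \<Rightarrow> 'p \<Rightarrow> 'p" where
  "neg_on L Z U X = (THE Y. Y \<in> line L Z U \<and> add_on L Z U X Y = Z)"

definition inv_on :: "'p set set \<Rightarrow> 'p \<Rightarrow> 'p \<Rightarrow> 'p \<Rightarrow> 'p" where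
  "inv_on L Z U X = (THE Y. Y \<in> line L Z U \<and> mul_on L Z U X Y = U)"

definition sub_on :: "'p set set \<Rightarrow> 'p \<Rightarrow> 'p \<Rightarrow> 'p \<Rightarrow> 'p \<Rightarrow> 'p" where
  "sub_on L Z U X Y = add_on L Z U X (neg_on L Z U Y)"

definition ratio :: "'p set set \<Rightarrow> 'p \<Rightarrow> 'p \<Rightarrow> 'p \<Rightarrow> 'p \<Rightarrow> 'p \<Rightarrow> 'p" where
  "ratio L Z U A B C = mul_on L Z U (inv_on L Z U (sub_on L Z U B C)) (sub_on L Z U A C)"

definition collineation :: "'p set set \<Rightarrow> ('p \<Rightarrow> 'p) \<Rightarrow> bool" where
  "collineation L f \<longleftrightarrow> bij f \<and> (\<forall>l. f ` l \<in> L \<longleftrightarrow> l \<in> L)"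

definition dilatation :: "'p set set \<Rightarrow> ('p \<Rightarrow> 'p) \<Rightarrow> bool" where
  "dilatation L f \<longleftrightarrow> collineation L f \<and>
     (\<forall>P Q. P \<noteq> Q \<longrightarrow> parallel L (line L (f P) (f Q)) (line L P Q))"

definition translation :: "'p set set \<Rightarrow> ('p \<Rightarrow> 'p) \<Rightarrow> bool" where
  "translation L f \<longleftrightarrow> f = id \<or> (dilatation L f \<and> (\<forall>P. f P \<noteq> P))"

end

theory Submission
  imports Defs
begin


definition addb :: "'p set set \<Rightarrow> 'p set \<Rightarrow> 'p \<Rightarrow> 'p \<Rightarrow> 'p \<Rightarrow> 'p \<Rightarrow> 'p" where
  "addb L l Z b A B = meet l (par_line L (meet (par_line L b l) (par_line L A (line L Z b))) (line L B b))"

definition mulb :: "'p set set \<Rightarrow> 'p set \<Rightarrow> 'p \<Rightarrow> 'p \<Rightarrow> 'p \<Rightarrow> 'p \<Rightarrow> 'p \<Rightarrow> 'p" where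
  "mulb L l Z U b A B = meet l (par_line L (meet (par_line L A (line L U b)) (line L Z b)) (line L B b))"

lemma add_on_addb: "add_on L Z U A B = addb L (line L Z U) Z (SOME b. b \<notin> line L Z U) A B"
  by (simp add: add_on_def addb_def Let_def)

lemma mul_on_mulb: "mul_on L Z U A B = mulb L (line L Z U) Z U (SOME b. b \<notin> line L Z U) A B"
  by (simp add: mul_on_def mulb_def Let_def)

lemma line_sym: "line L A B = line L B A"
  unfolding line_def by (rule arg_cong[where f=The]) auto

locale dap =
  fixes L :: "'p set set"
  assumes dap: "desargues_affine_plane L"
begin

lemma ax_two: "l \<in> L \<Longrightarrow> \<exists>A B. A \<noteq> B \<and> A \<in> l \<and> B \<in> l"
  using dap[unfolded desargues_affine_plane_def, THEN conjunct1] by blast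

lemma ax_line: "A \<noteq> B \<Longrightarrow> \<exists>!l. l \<in> L \<and> A \<in> l \<and> B \<in> l"
  using dap[unfolded desargues_affine_plane_def, THEN conjunct2, THEN conjunct1] by blast

lemma ax_play: "l \<in> L \<Longrightarrow> P \<notin> l \<Longrightarrow> \<exists>!m. m \<in> L \<and> P \<in> m \<and> m \<inter> l = {}"
  using dap[unfolded desargues_affine_plane_def, THEN conjunct2, THEN conjunct2, THEN conjunct1] by blast

lemma ax_noncol: "\<exists>A B C. \<not> collinear L A B C"
  using dap[unfolded desargues_affine_plane_def, THEN conjunct2, THEN conjunct2, THEN conjunct2, THEN conjunct1] by blast

lemma desargues:
  assumes "A \<noteq> A'" "B \<noteq> B'" "C \<noteq> C'" "A \<noteq> B" "A' \<noteq> B'" "B \<noteq> C" "B' \<noteq> C'"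
    "A \<noteq> C" "A' \<noteq> C'"
    "line L A A' \<noteq> line L B B'" "line L B B' \<noteq> line L C C'" "line L A A' \<noteq> line L C C'"
    "(parallel L (line L A A') (line L B B') \<and> parallel L (line L B B') (line L C C') \<and>
          parallel L (line L A A') (line L C C'))
         \<or> (\<exists>X. X \<in> line L A A' \<and> X \<in> line L B B' \<and> X \<in> line L C C')"
    "parallel L (line L A B) (line L A' B')" "parallel L (line L B C) (line L B' C')"
    "line L A B \<noteq> line L A' B'" "line L B C \<noteq> line L B' C'"
  shows "parallel L (line L A C) (line L A' C')"
proof -
  have H: "\<forall>A B C A' B' C'.
        A \<noteq> A' \<and> B \<noteq> B' \<and> C \<noteq> C' \<and> A \<noteq> B \<and> A' \<noteq> B' \<and> B \<noteq> C \<and> B' \<noteq> C' \<and>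
        A \<noteq> C \<and> A' \<noteq> C' \<and>
        line L A A' \<noteq> line L B B' \<and> line L B B' \<noteq> line L C C' \<and>
        line L A A' \<noteq> line L C C' \<and>
        ((parallel L (line L A A') (line L B B') \<and> parallel L (line L B B') (line L C C') \<and>
          parallel L (line L A A') (line L C C'))
         \<or> (\<exists>X. X \<in> line L A A' \<and> X \<in> line L B B' \<and> X \<in> line L C C')) \<and>
        parallel L (line L A B) (line L A' B') \<and> parallel L (line L B C) (line L B' C') \<and>
        line L A B \<noteq> line L A' B' \<and> line L B C \<noteq> line L B' C'
        \<longrightarrow> parallel L (line L A C) (line L A' C')"
    using dap[unfolded desargues_affine_plane_def, THEN conjunct2, THEN conjunct2, THEN conjunct2, THEN conjunct2] by assumption
  show ?thesis
    apply (rule H[rule_format, of A A' B B' C C'])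
    using assms by blast
qed

lemma line: "A \<noteq> B \<Longrightarrow> line L A B \<in> L \<and> A \<in> line L A B \<and> B \<in> line L A B"
  unfolding line_def by (rule theI') (rule ax_line)

lemma line_in: "A \<noteq> B \<Longrightarrow> line L A B \<in> L"
  and line_A: "A \<noteq> B \<Longrightarrow> A \<in> line L A B"
  and line_B: "A \<noteq> B \<Longrightarrow> B \<in> line L A B"
  using line by auto

lemma line_eq: "A \<noteq> B \<Longrightarrow> l \<in> L \<Longrightarrow> A \<in> l \<Longrightarrow> B \<in> l \<Longrightarrow> line L A B = l"
  using line[of A B] ax_line[of A B] by blast

lemma inter2: "l \<in> L \<Longrightarrow> m \<in> L \<Longrightarrow> X \<in> l \<Longrightarrow> X \<in> m \<Longrightarrow> Y \<in> l \<Longrightarrow> Y \<in> m \<Longrightarrow> X \<noteq> Y \<Longrightarrow> l = m"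
  using ax_line by blast

lemma par_refl: "l \<in> L \<Longrightarrow> parallel L l l"
  by (simp add: parallel_def)

lemma par_sym: "parallel L l m \<Longrightarrow> parallel L m l"
  by (auto simp: parallel_def)

lemma par_L: "parallel L l m \<Longrightarrow> l \<in> L" "parallel L l m \<Longrightarrow> m \<in> L"
  by (auto simp: parallel_def)

lemma par_point_eq: "parallel L m n \<Longrightarrow> X \<in> m \<Longrightarrow> X \<in> n \<Longrightarrow> m = n"
  by (auto simp: parallel_def)

lemma par_trans: assumes "parallel L a b" "parallel L b c" shows "parallel L a c"
proof -
  have L: "a \<in> L" "b \<in> L" "c \<in> L" using assms by (auto simp: parallel_def)
  show ?thesis
  proof (cases "a = b \<or> b = c")
    case True then show ?thesis using assms by auto
  next
    case False
    then have d: "a \<inter> b = {}" "b \<inter> c = {}" using assms by (auto simp: parallel_def)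
    show ?thesis
    proof (rule ccontr)
      assume "\<not> parallel L a c"
      then obtain X where X: "X \<in> a" "X \<in> c" "a \<noteq> c" using L by (auto simp: parallel_def)
      have "X \<notin> b" using X d by auto
      from ax_play[OF L(2) this] have "a = c" using X d L by blast
      then show False using X by simp
    qed
  qed
qed

lemma par_line_ex: "m \<in> L \<Longrightarrow> \<exists>!n. n \<in> L \<and> P \<in> n \<and> parallel L n m"
proof -
  assume m: "m \<in> L"
  show ?thesis
  proof (cases "P \<in> m")
    case True
    show ?thesis
    proof (rule ex1I[of _ m])
      show "m \<in> L \<and> P \<in> m \<and> parallel L m m" using m True par_refl by auto
      show "\<And>n. n \<in> L \<and> P \<in> n \<and> parallel L n m \<Longrightarrow> n = m" using True par_point_eq by blast
    qed
  next
    case False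
    from ax_play[OF m False] obtain n where n: "n \<in> L" "P \<in> n" "n \<inter> m = {}" by blast
    show ?thesis
    proof (rule ex1I[of _ n])
      show "n \<in> L \<and> P \<in> n \<and> parallel L n m" using n m by (auto simp: parallel_def)
      fix k assume k: "k \<in> L \<and> P \<in> k \<and> parallel L k m"
      then have "k \<inter> m = {}" using False by (auto simp: parallel_def)
      then show "k = n" using ax_play[OF m False] k n by blast
    qed
  qed
qed

lemma par_line: "m \<in> L \<Longrightarrow> par_line L P m \<in> L \<and> P \<in> par_line L P m \<and> parallel L (par_line L P m) m"
  unfolding par_line_def by (rule theI') (rule par_line_ex)

lemma par_line_in: "m \<in> L \<Longrightarrow> par_line L P m \<in> L"
  and par_line_P: "m \<in> L \<Longrightarrow> P \<in> par_line L P m"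
  and par_line_par: "m \<in> L \<Longrightarrow> parallel L (par_line L P m) m"
  using par_line by auto

lemma par_line_eq: "m \<in> L \<Longrightarrow> n \<in> L \<Longrightarrow> P \<in> n \<Longrightarrow> parallel L n m \<Longrightarrow> par_line L P m = n"
  using par_line[of m P] par_line_ex[of m P] by blast

lemma npar_ne: "\<not> parallel L l m \<Longrightarrow> l \<in> L \<Longrightarrow> l \<noteq> m"
  using par_refl by auto

lemma npar_meet: assumes "l \<in> L" "m \<in> L" "\<not> parallel L l m"
  shows "meet l m \<in> l \<and> meet l m \<in> m"
proof -
  obtain X where X: "X \<in> l" "X \<in> m" using assms by (auto simp: parallel_def)
  have "l \<noteq> m" using assms par_refl by auto
  then have "\<exists>!X. X \<in> l \<and> X \<in> m" using X inter2 assms by blast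
  then show ?thesis unfolding meet_def by (rule theI')
qed

lemma meet_eq: "l \<in> L \<Longrightarrow> m \<in> L \<Longrightarrow> l \<noteq> m \<Longrightarrow> X \<in> l \<Longrightarrow> X \<in> m \<Longrightarrow> meet l m = X"
  unfolding meet_def by (rule the_equality) (auto dest: inter2)

lemma npar_I: "l \<in> L \<Longrightarrow> m \<in> L \<Longrightarrow> l \<noteq> m \<Longrightarrow> X \<in> l \<Longrightarrow> X \<in> m \<Longrightarrow> \<not> parallel L l m"
  by (auto simp: parallel_def)

lemma npar_par: "\<not> parallel L a c \<Longrightarrow> parallel L a b \<Longrightarrow> \<not> parallel L b c"
  using par_trans by blast

lemma npar_par2: "\<not> parallel L a c \<Longrightarrow> parallel L c b \<Longrightarrow> \<not> parallel L a b"
  using par_trans par_sym by blast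

lemma npar_sym: "\<not> parallel L a c \<Longrightarrow> \<not> parallel L c a"
  using par_sym by blast

end


context dap
begin

lemma par_line_disj: "l \<in> L \<Longrightarrow> b \<notin> l \<Longrightarrow> par_line L b l \<inter> l = {}"
  using par_line[of l b] by (auto simp: parallel_def)

lemma npar_line: "l \<in> L \<Longrightarrow> B \<in> l \<Longrightarrow> b \<notin> l \<Longrightarrow> \<not> parallel L l (line L B b)"
  by (metis line npar_I)

lemma line_sub_eq: "A \<noteq> B \<Longrightarrow> l \<in> L \<Longrightarrow> A \<in> l \<Longrightarrow> B \<in> l \<Longrightarrow> l = line L A B"
  using line_eq by auto

lemma R_facts:
  assumes "l \<in> L" "B \<in> l" "b \<notin> l"
  shows "\<not> parallel L l (par_line L P (line L B b))"
    "meet l (par_line L P (line L B b)) \<in> l"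
    "meet l (par_line L P (line L B b)) \<in> par_line L P (line L B b)"
proof -
  have bB: "B \<noteq> b" using assms by auto
  have "\<not> parallel L l (par_line L P (line L B b))"
    using npar_par2[OF npar_line[OF assms] par_sym[OF par_line_par[OF line_in[OF bB]]]] .
  then show "\<not> parallel L l (par_line L P (line L B b))"
    "meet l (par_line L P (line L B b)) \<in> l"
    "meet l (par_line L P (line L B b)) \<in> par_line L P (line L B b)"
    using npar_meet assms par_line_in line_in[OF bB] by auto
qed

lemma add_P:
  assumes "l \<in> L" "Z \<in> l" "A \<in> l" "b \<notin> l"
  shows "\<not> parallel L (par_line L b l) (par_line L A (line L Z b))"
    "meet (par_line L b l) (par_line L A (line L Z b)) \<in> par_line L b l"
    "meet (par_line L b l) (par_line L A (line L Z b)) \<in> par_line L A (line L Z b)"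
    "meet (par_line L b l) (par_line L A (line L Z b)) \<notin> l"
proof -
  have Zb: "Z \<noteq> b" using assms by auto
  have np: "\<not> parallel L l (line L Z b)" using npar_line assms by auto
  show np2: "\<not> parallel L (par_line L b l) (par_line L A (line L Z b))"
    by (meson np par_line_par line_in[OF Zb] assms(1) par_sym par_trans)
  have "meet (par_line L b l) (par_line L A (line L Z b)) \<in> par_line L b l \<and>
        meet (par_line L b l) (par_line L A (line L Z b)) \<in> par_line L A (line L Z b)"
    by (rule npar_meet[OF par_line_in par_line_in np2]) (use assms line_in[OF Zb] in auto)
  then show "meet (par_line L b l) (par_line L A (line L Z b)) \<in> par_line L b l"
    "meet (par_line L b l) (par_line L A (line L Z b)) \<in> par_line L A (line L Z b)"
    "meet (par_line L b l) (par_line L A (line L Z b)) \<notin> l"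
    using par_line_disj[OF assms(1,4)] by auto
qed

lemma add_basic:
  assumes l: "l \<in> L" "Z \<in> l" "A \<in> l" "B \<in> l" "b \<notin> l" "A \<noteq> Z"
  defines "P \<equiv> meet (par_line L b l) (par_line L A (line L Z b))"
  defines "R \<equiv> addb L l Z b A B"
  shows "P \<in> par_line L b l" "P \<in> par_line L A (line L Z b)" "P \<notin> l" "P \<noteq> b"
    "R \<in> l" "R \<in> par_line L P (line L B b)" "R \<noteq> B"
    "line L A P = par_line L A (line L Z b)" "line L P R = par_line L P (line L B b)"
    "R = meet l (par_line L P (line L B b))"
proof -
  have Zb: "Z \<noteq> b" and Bb: "B \<noteq> b" using l by auto
  note PP = add_P[OF l(1,2,3,5), folded P_def]
  show P1: "P \<in> par_line L b l" "P \<in> par_line L A (line L Z b)" "P \<notin> l" using PP by auto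
  show RR: "R = meet l (par_line L P (line L B b))" unfolding R_def addb_def P_def ..
  note RF = R_facts[OF l(1,4,5), of P, folded RR]
  show R1: "R \<in> l" "R \<in> par_line L P (line L B b)" using RF by auto
  have ZbL: "line L Z b \<in> L" using line_in[OF Zb] .
  show Pb: "P \<noteq> b"
  proof
    assume "P = b"
    then have "par_line L A (line L Z b) = line L Z b"
      using par_point_eq[OF par_line_par[OF ZbL]] P1 line_B[OF Zb] by blast
    then have "A \<in> line L Z b" using par_line_P[OF ZbL] by metis
    then have "l = line L Z b" using inter2[OF l(1) ZbL l(2) line_A[OF Zb] l(3)] l(6) by auto
    then show False using l(5) line_B[OF Zb] by auto
  qed
  have BbL: "line L B b \<in> L" using line_in[OF Bb] .
  show "R \<noteq> B"
  proof
    assume "R = B"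
    then have "par_line L P (line L B b) = line L B b"
      using par_point_eq[OF par_line_par[OF BbL]] R1 line_A[OF Bb] by blast
    then have "P \<in> line L B b" using par_line_P[OF BbL] by metis
    moreover have "line L B b \<noteq> par_line L b l" using par_line_disj[OF l(1,5)] line_A[OF Bb] l(4) by auto
    ultimately show False using inter2[OF BbL par_line_in[OF l(1)] _ P1(1) line_B[OF Bb] par_line_P[OF l(1)]] Pb
      by blast
  qed
  show "line L A P = par_line L A (line L Z b)"
    using line_eq[of A P] P1 l par_line_in[OF ZbL] par_line_P[OF ZbL] by metis
  show "line L P R = par_line L P (line L B b)"
    using line_eq[of P R] P1 R1 par_line_in[OF BbL] par_line_P[OF BbL] by metis
qed

end


context dap
begin

lemma not_on_line_Zb: "l \<in> L \<Longrightarrow> Z \<in> l \<Longrightarrow> A \<in> l \<Longrightarrow> b \<notin> l \<Longrightarrow> A \<noteq> Z \<Longrightarrow> A \<notin> line L Z b"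
  by (metis inter2 line)

lemma add_indep_nd:
  assumes l: "l \<in> L" "Z \<in> l" "A \<in> l" "B \<in> l" "b \<notin> l" "c \<notin> l" "A \<noteq> Z" "B \<noteq> Z"
    and cb: "c \<notin> par_line L b l"
  shows "addb L l Z b A B = addb L l Z c A B"
proof -
  define Pb where "Pb = meet (par_line L b l) (par_line L A (line L Z b))"
  define Pc where "Pc = meet (par_line L c l) (par_line L A (line L Z c))"
  define Rb where "Rb = addb L l Z b A B"
  define Rc where "Rc = addb L l Z c A B"
  define mb where "mb = par_line L b l"
  define mc where "mc = par_line L c l"
  note fb = add_basic[OF l(1-5,7), folded Pb_def Rb_def mb_def]
  note fc = add_basic[OF l(1-4,6,7), folded Pc_def Rc_def mc_def]
  have mbL: "mb \<in> L" and mcL: "mc \<in> L" using par_line_in l(1) mb_def mc_def by auto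
  have bmb: "b \<in> mb" and cmc: "c \<in> mc" using par_line_P l(1) mb_def mc_def by auto
  have pmb: "parallel L mb l" and pmc: "parallel L mc l" using par_line_par l(1) mb_def mc_def by auto
  have cmb: "c \<notin> mb" using cb mb_def by simp
  have mbmc: "mb \<noteq> mc" using cmb cmc by auto
  have pbc: "parallel L mb mc" using par_trans[OF pmb par_sym[OF pmc]] .
  have dbc: "mb \<inter> mc = {}" using pbc mbmc by (auto simp: parallel_def)
  have bc: "b \<noteq> c" using bmb cmb by auto
  have PbPc: "Pb \<noteq> Pc" using fb(1) fc(1) dbc by auto
  have lmb: "l \<noteq> mb" "l \<noteq> mc" using l(5,6) bmb cmc by auto
  have dl: "mb \<inter> l = {}" "mc \<inter> l = {}" using par_line_disj l mb_def mc_def by auto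
  have Zb: "Z \<noteq> b" "Z \<noteq> c" "B \<noteq> b" "B \<noteq> c" using l by auto
  have lbP: "line L b Pb = mb" using line_eq[of b Pb mb] fb bmb mbL by auto
  have lcP: "line L c Pc = mc" using line_eq[of c Pc mc] fc cmc mcL by auto
  have lZA: "line L Z A = l" using line_eq[of Z A l] l by auto
  have AZb: "A \<notin> line L Z b" "A \<notin> line L Z c" using not_on_line_Zb l by auto
  have D1: "parallel L (line L b c) (line L Pb Pc)"
  proof (rule desargues[of b Pb Z A c Pc])
    show "b \<noteq> Pb" "Z \<noteq> A" "c \<noteq> Pc" "b \<noteq> Z" "Pb \<noteq> A" "Z \<noteq> c" "A \<noteq> Pc" "b \<noteq> c" "Pb \<noteq> Pc"
      using fb fc l bc PbPc by auto
    show "line L b Pb \<noteq> line L Z A" "line L Z A \<noteq> line L c Pc" "line L b Pb \<noteq> line L c Pc"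
      using lbP lcP lZA lmb mbmc by auto
    show "parallel L (line L b Pb) (line L Z A) \<and> parallel L (line L Z A) (line L c Pc) \<and>
          parallel L (line L b Pb) (line L c Pc) \<or>
          (\<exists>X. X \<in> line L b Pb \<and> X \<in> line L Z A \<and> X \<in> line L c Pc)"
      using lbP lcP lZA pmb pmc pbc par_sym by auto
    have e1: "line L Pb A = par_line L A (line L Z b)" using fb(8) line_sym by metis
    have e2: "line L A Pc = par_line L A (line L Z c)" using fc(8) .
    show "parallel L (line L b Z) (line L Pb A)"
      using e1 line_sym[of L b Z] par_sym[OF par_line_par[OF line_in[OF Zb(1)]]] by metis
    show "parallel L (line L Z c) (line L A Pc)"
      using e2 par_sym[OF par_line_par[OF line_in[OF Zb(2)]]] by metis
    show "line L b Z \<noteq> line L Pb A"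
      using e1 line_sym[of L b Z] par_line_P[OF line_in[OF Zb(1)]] AZb by metis
    show "line L Z c \<noteq> line L A Pc"
      using e2 par_line_P[OF line_in[OF Zb(2)]] AZb by metis
  qed
  have Rb_l: "line L B Rb = l" using line_eq[of B Rb l] fb l by auto
  have D2: "parallel L (line L c B) (line L Pc Rb)"
  proof (rule desargues[of c Pc b Pb B Rb])
    show "c \<noteq> Pc" "b \<noteq> Pb" "B \<noteq> Rb" "c \<noteq> b" "Pc \<noteq> Pb" "b \<noteq> B" "Pb \<noteq> Rb" "c \<noteq> B" "Pc \<noteq> Rb"
      using fb fc l bc PbPc by auto
    show "line L c Pc \<noteq> line L b Pb" "line L b Pb \<noteq> line L B Rb" "line L c Pc \<noteq> line L B Rb"
      using lbP lcP Rb_l lmb mbmc by auto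
    show "parallel L (line L c Pc) (line L b Pb) \<and> parallel L (line L b Pb) (line L B Rb) \<and>
          parallel L (line L c Pc) (line L B Rb) \<or>
          (\<exists>X. X \<in> line L c Pc \<and> X \<in> line L b Pb \<and> X \<in> line L B Rb)"
      using lbP lcP Rb_l pmb pmc pbc par_sym by auto
    show "parallel L (line L c b) (line L Pc Pb)" using D1 line_sym par_sym by metis
    show "parallel L (line L b B) (line L Pb Rb)"
      using fb(9) line_sym[of L b B] par_sym[OF par_line_par[OF line_in[OF Zb(3)]]] by metis
    have bcL: "line L b c \<in> L" using line_in[OF bc] .
    have "line L b c \<noteq> mb" using line_B[OF bc] cmb by auto
    then have "Pb \<notin> line L b c" using inter2[OF bcL mbL line_A[OF bc] bmb] fb(1,4) by blast
    then show "line L c b \<noteq> line L Pc Pb" using line_B[of Pc Pb] PbPc line_sym by metis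
    have BbL: "line L B b \<in> L" using line_in[OF Zb(3)] .
    have "line L B b \<noteq> mb" using line_A[OF Zb(3)] dl l(4) by auto
    then have "Pb \<notin> line L B b" using inter2[OF BbL mbL line_B[OF Zb(3)] bmb] fb(1,4) by blast
    then show "line L b B \<noteq> line L Pb Rb" using line_A[of Pb Rb] fb(3,5) line_sym by metis
  qed
  have PcRb: "Pc \<noteq> Rb" using fc(3) fb(5) by auto
  have BcL: "line L B c \<in> L" using line_in[OF Zb(4)] .
  have "line L Pc Rb = par_line L Pc (line L B c)"
    using par_line_eq[OF BcL line_in[OF PcRb] line_A[OF PcRb]] D2 line_sym par_sym by metis
  then have "Rb \<in> par_line L Pc (line L B c)" using line_B[OF PcRb] by simp
  moreover note RF = R_facts[OF l(1,4,6), of Pc]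
  ultimately have "meet l (par_line L Pc (line L B c)) = Rb"
    using meet_eq[OF l(1) par_line_in[OF BcL]] npar_ne[OF RF(1) l(1)] fb(5) by blast
  then show ?thesis using fc(10) Rb_def Rc_def by simp
qed

end


context dap
begin

lemma addb_AZ:
  assumes l: "l \<in> L" "Z \<in> l" "B \<in> l" "b \<notin> l"
  shows "addb L l Z b Z B = B"
proof -
  have Zb: "Z \<noteq> b" "B \<noteq> b" using l by auto
  have ZbL: "line L Z b \<in> L" using line_in[OF Zb(1)] .
  have e1: "par_line L Z (line L Z b) = line L Z b"
    using par_line_eq[OF ZbL ZbL line_A[OF Zb(1)] par_refl[OF ZbL]] .
  have "Z \<notin> par_line L b l" using par_line_disj[OF l(1,4)] l(2) by auto
  then have ne: "par_line L b l \<noteq> line L Z b" using line_A[OF Zb(1)] by auto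
  have e2: "meet (par_line L b l) (line L Z b) = b"
    using meet_eq[OF par_line_in[OF l(1)] ZbL ne par_line_P[OF l(1)] line_B[OF Zb(1)]] .
  have BbL: "line L B b \<in> L" using line_in[OF Zb(2)] .
  have e3: "par_line L b (line L B b) = line L B b"
    using par_line_eq[OF BbL BbL line_B[OF Zb(2)] par_refl[OF BbL]] .
  have "l \<noteq> line L B b" using line_B[OF Zb(2)] l(4) by auto
  then have "meet l (line L B b) = B" using meet_eq[OF l(1) BbL _ l(3) line_A[OF Zb(2)]] by blast
  then show ?thesis unfolding addb_def e1 e2 e3 .
qed

lemma addb_BZ:
  assumes l: "l \<in> L" "Z \<in> l" "A \<in> l" "b \<notin> l"
  shows "addb L l Z b A Z = A"
proof -
  have Zb: "Z \<noteq> b" using l by auto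
  have ZbL: "line L Z b \<in> L" using line_in[OF Zb(1)] .
  note PP = add_P[OF l]
  define n where "n = par_line L A (line L Z b)"
  define P where "P = meet (par_line L b l) n"
  have nL: "n \<in> L" using par_line_in[OF ZbL] n_def by simp
  have Pn: "P \<in> n" using PP(3) n_def P_def by simp
  have e1: "par_line L P (line L Z b) = n"
    using par_line_eq[OF ZbL nL Pn] par_line_par[OF ZbL] n_def by simp
  have "\<not> parallel L l n" using npar_par2[OF npar_line[OF l(1,2,4)] par_sym[OF par_line_par[OF ZbL]]] n_def by simp
  then have "l \<noteq> n" using npar_ne l(1) by blast
  then have "meet l n = A" using meet_eq[OF l(1) nL _ l(3)] par_line_P[OF ZbL] n_def by blast
  then show ?thesis unfolding addb_def using e1 P_def n_def by simp
qed

lemma deg_two: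
  assumes l: "l \<in> L" "b \<notin> l" "c \<in> par_line L b l" "c \<noteq> b" "Z \<in> l"
    and deg: "\<forall>d. d \<in> l \<or> d \<in> par_line L b l"
    and XY: "X \<in> l" "Y \<in> l" "X \<noteq> Z" "Y \<noteq> Z"
  shows "X = Y"
proof (rule ccontr)
  assume XYne: "X \<noteq> Y"
  define mb where "mb = par_line L b l"
  have mbL: "mb \<in> L" using par_line_in[OF l(1)] mb_def by simp
  have bmb: "b \<in> mb" using par_line_P[OF l(1)] mb_def by simp
  have dl: "mb \<inter> l = {}" using par_line_disj[OF l(1,2)] mb_def by simp
  have cl: "c \<notin> l" using dl l(3) mb_def by auto
  have Zb: "Z \<noteq> b" using l by auto
  have bZL: "line L b Z \<in> L" using line_in Zb by metis
  have bZl: "line L b Z \<noteq> l" "line L b Z \<noteq> mb" using line_A[of b Z] line_B[of b Z] Zb l(2) dl l(5) by auto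
  have bZ_mb: "y \<in> line L b Z \<Longrightarrow> y \<in> mb \<Longrightarrow> y = b" for y
    using inter2[OF bZL mbL _ _ line_A[of b Z] bmb] Zb bZl by blast
  have bZ_l: "y \<in> line L b Z \<Longrightarrow> y \<in> l \<Longrightarrow> y = Z" for y
    using inter2[OF bZL l(1) _ _ line_B[of b Z] l(5)] Zb bZl by blast
  have disj: "line L c W \<inter> line L b Z = {}" if W: "W \<in> l" "W \<noteq> Z" for W
  proof -
    have cW: "c \<noteq> W" using W cl by auto
    have cWL: "line L c W \<in> L" using line_in[OF cW] .
    have cWl: "line L c W \<noteq> l" "line L c W \<noteq> mb" using line_A[OF cW] line_B[OF cW] cl dl W by auto
    have cW_l: "y \<in> line L c W \<Longrightarrow> y \<in> l \<Longrightarrow> y = W" for y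
      using inter2[OF cWL l(1) _ _ line_B[OF cW] W(1)] cWl by blast
    have cW_mb: "y \<in> line L c W \<Longrightarrow> y \<in> mb \<Longrightarrow> y = c" for y
      using inter2[OF cWL mbL _ _ line_A[OF cW]] l(3) mb_def cWl by blast
    show ?thesis
    proof (rule ccontr)
      assume "line L c W \<inter> line L b Z \<noteq> {}"
      then obtain y where y: "y \<in> line L c W" "y \<in> line L b Z" by blast
      from deg have "y \<in> l \<or> y \<in> mb" using mb_def by auto
      then show False
      proof
        assume "y \<in> l" then show False using cW_l bZ_l y W by metis
      next
        assume "y \<in> mb" then show False using cW_mb bZ_mb y l(4) by metis
      qed
    qed
  qed
  have cnot: "c \<notin> line L b Z" using bZ_mb l(3,4) mb_def by blast
  have cX: "c \<noteq> X" "c \<noteq> Y" using cl XY by auto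
  have "line L c X = line L c Y"
    using ax_play[OF bZL cnot] disj[OF XY(1,3)] disj[OF XY(2,4)] line_in[OF cX(1)] line_in[OF cX(2)]
      line_A[OF cX(1)] line_A[OF cX(2)] by blast
  then have "line L c X = l"
    using inter2[OF line_in[OF cX(1)] l(1) line_B[OF cX(1)] XY(1) _ XY(2) XYne] line_B[OF cX(2)] by metis
  then show False using line_A[OF cX(1)] cl by auto
qed

lemma add_indep:
  assumes l: "l \<in> L" "Z \<in> l" "A \<in> l" "B \<in> l" "b \<notin> l" "c \<notin> l"
  shows "addb L l Z b A B = addb L l Z c A B"
proof (cases "A = Z \<or> B = Z \<or> b = c")
  case True
  then show ?thesis using addb_AZ addb_BZ l by metis
next
  case False
  then have AZ: "A \<noteq> Z" "B \<noteq> Z" "b \<noteq> c" by auto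
  show ?thesis
  proof (cases "c \<in> par_line L b l")
    case False
    then show ?thesis using add_indep_nd l AZ by blast
  next
    case cb: True
    show ?thesis
    proof (cases "\<exists>d. d \<notin> l \<and> d \<notin> par_line L b l")
      case True
      then obtain d where d: "d \<notin> l" "d \<notin> par_line L b l" by blast
      have e1: "addb L l Z b A B = addb L l Z d A B" using add_indep_nd l AZ d by blast
      have "par_line L c l = par_line L b l"
        using par_line_eq[OF l(1) par_line_in[OF l(1)] cb par_line_par[OF l(1)]] .
      moreover have "par_line L c l = par_line L d l" if "c \<in> par_line L d l"
        using par_line_eq[OF l(1) par_line_in[OF l(1)] that par_line_par[OF l(1)]] .
      ultimately have "c \<notin> par_line L d l" using d par_line_P[OF l(1), of d] by metis
      then have e2: "addb L l Z d A B = addb L l Z c A B" using add_indep_nd l AZ d by blast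
      show ?thesis using e1 e2 by simp
    next
      case False
      then have deg: "\<forall>d. d \<in> l \<or> d \<in> par_line L b l" by blast
      note fb = add_basic[OF l(1-5) AZ(1)]
      note fc = add_basic[OF l(1-4,6) AZ(1)]
      have "addb L l Z b A B = Z"
        using deg_two[OF l(1,5) cb AZ(3)[symmetric] l(2) deg fb(5) l(4)] fb(7) AZ(2) by blast
      moreover have "addb L l Z c A B = Z"
        using deg_two[OF l(1,5) cb AZ(3)[symmetric] l(2) deg fc(5) l(4)] fc(7) AZ(2) by blast
      ultimately show ?thesis by simp
    qed
  qed
qed

end


context dap
begin

lemma mul_P:
  assumes l: "l \<in> L" "Z \<in> l" "U \<in> l" "A \<in> l" "Z \<noteq> U" "b \<notin> l"
  shows "\<not> parallel L (par_line L A (line L U b)) (line L Z b)"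
    "meet (par_line L A (line L U b)) (line L Z b) \<in> par_line L A (line L U b)"
    "meet (par_line L A (line L U b)) (line L Z b) \<in> line L Z b"
proof -
  have Zb: "Z \<noteq> b" "U \<noteq> b" using l by auto
  have UZb: "U \<notin> line L Z b" using not_on_line_Zb l by metis
  have "line L U b \<noteq> line L Z b" using UZb line_A[OF Zb(2)] by auto
  then have np: "\<not> parallel L (line L U b) (line L Z b)"
    using npar_I[OF line_in[OF Zb(2)] line_in[OF Zb(1)] _ line_B[OF Zb(2)] line_B[OF Zb(1)]] by blast
  show np2: "\<not> parallel L (par_line L A (line L U b)) (line L Z b)"
    using npar_par[OF np par_sym[OF par_line_par[OF line_in[OF Zb(2)]]]] .
  show "meet (par_line L A (line L U b)) (line L Z b) \<in> par_line L A (line L U b)"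
    "meet (par_line L A (line L U b)) (line L Z b) \<in> line L Z b"
    using npar_meet[OF par_line_in[OF line_in[OF Zb(2)]] line_in[OF Zb(1)] np2] by auto
qed

lemma mul_basic:
  assumes l: "l \<in> L" "Z \<in> l" "U \<in> l" "A \<in> l" "B \<in> l" "Z \<noteq> U" "b \<notin> l"
    and AZ: "A \<noteq> Z" "A \<noteq> U" "B \<noteq> Z"
  defines "P \<equiv> meet (par_line L A (line L U b)) (line L Z b)"
  defines "R \<equiv> mulb L l Z U b A B"
  shows "P \<in> par_line L A (line L U b)" "P \<in> line L Z b" "P \<noteq> Z" "P \<notin> l" "P \<noteq> b"
    "R \<in> l" "R \<in> par_line L P (line L B b)" "R \<noteq> B" "R \<noteq> Z"
    "line L A P = par_line L A (line L U b)" "line L P R = par_line L P (line L B b)"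
    "R = meet l (par_line L P (line L B b))" "line L b P = line L Z b"
proof -
  have Zb: "Z \<noteq> b" "U \<noteq> b" "B \<noteq> b" using l by auto
  have ZbL: "line L Z b \<in> L" and UbL: "line L U b \<in> L" and BbL: "line L B b \<in> L"
    using line_in Zb by auto
  note PP = mul_P[OF l(1,2,3,4,6,7), folded P_def]
  show P1: "P \<in> par_line L A (line L U b)" "P \<in> line L Z b" using PP by auto
  show RR: "R = meet l (par_line L P (line L B b))" unfolding R_def mulb_def P_def ..
  note RF = R_facts[OF l(1,5,7), of P, folded RR]
  show R1: "R \<in> l" "R \<in> par_line L P (line L B b)" using RF by auto
  have lZb: "l \<noteq> line L Z b" using line_B[OF Zb(1)] l(7) by auto
  have lUb: "l \<noteq> line L U b" using line_B[OF Zb(2)] l(7) by auto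
  show PZ: "P \<noteq> Z"
  proof
    assume "P = Z"
    then have "par_line L A (line L U b) = l"
      using inter2[OF par_line_in[OF UbL] l(1) par_line_P[OF UbL] l(4) _ l(2)] P1 AZ by metis
    then have "parallel L l (line L U b)" using par_line_par[OF UbL] by metis
    then show False using par_point_eq l(3) line_A[OF Zb(2)] lUb by blast
  qed
  show Pl: "P \<notin> l" using inter2[OF l(1) ZbL _ P1(2) l(2) line_A[OF Zb(1)]] PZ lZb by blast
  show Pb: "P \<noteq> b"
  proof
    assume "P = b"
    then have "par_line L A (line L U b) = line L U b"
      using par_point_eq[OF par_line_par[OF UbL]] P1 line_B[OF Zb(2)] by blast
    then have "A \<in> line L U b" using par_line_P[OF UbL] by metis
    then show False using inter2[OF l(1) UbL l(3) line_A[OF Zb(2)] l(4)] AZ lUb by metis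
  qed
  have BZb: "line L B b \<noteq> line L Z b"
    using inter2[OF l(1) ZbL l(5) _ l(2) line_A[OF Zb(1)]] line_A[OF Zb(3)] AZ(3) lZb by metis
  show "R \<noteq> B"
  proof
    assume "R = B"
    then have "par_line L P (line L B b) = line L B b"
      using par_point_eq[OF par_line_par[OF BbL]] R1 line_A[OF Zb(3)] by blast
    then have "P \<in> line L B b" using par_line_P[OF BbL] by metis
    then show False using inter2[OF BbL ZbL _ P1(2) line_B[OF Zb(3)] line_B[OF Zb(1)]] BZb Pb by blast
  qed
  show "R \<noteq> Z"
  proof
    assume "R = Z"
    then have "par_line L P (line L B b) = line L Z b"
      using inter2[OF par_line_in[OF BbL] ZbL par_line_P[OF BbL] P1(2) _ line_A[OF Zb(1)]] R1 PZ by metis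
    then have "parallel L (line L Z b) (line L B b)" using par_line_par[OF BbL] by metis
    then show False using par_point_eq line_B[OF Zb(1)] line_B[OF Zb(3)] BZb by metis
  qed
  show "line L A P = par_line L A (line L U b)"
    using line_eq[of A P] P1 Pl l par_line_in[OF UbL] par_line_P[OF UbL] by metis
  show "line L P R = par_line L P (line L B b)"
    using line_eq[of P R] Pl R1 par_line_in[OF BbL] par_line_P[OF BbL] by metis
  show "line L b P = line L Z b"
    using line_eq[of b P] Pb P1 ZbL line_B[OF Zb(1)] by metis
qed

lemma mul_indep_nd:
  assumes l: "l \<in> L" "Z \<in> l" "U \<in> l" "A \<in> l" "B \<in> l" "Z \<noteq> U" "b \<notin> l" "c \<notin> l"
    and AZ: "A \<noteq> Z" "A \<noteq> U" "B \<noteq> Z"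
    and cb: "c \<notin> line L Z b"
  shows "mulb L l Z U b A B = mulb L l Z U c A B"
proof -
  define Pb where "Pb = meet (par_line L A (line L U b)) (line L Z b)"
  define Pc where "Pc = meet (par_line L A (line L U c)) (line L Z c)"
  define Rb where "Rb = mulb L l Z U b A B"
  define Rc where "Rc = mulb L l Z U c A B"
  note fb = mul_basic[OF l(1-7) AZ, folded Pb_def Rb_def]
  note fc = mul_basic[OF l(1-6,8) AZ, folded Pc_def Rc_def]
  have Zb: "Z \<noteq> b" "Z \<noteq> c" "B \<noteq> b" "B \<noteq> c" "U \<noteq> b" "U \<noteq> c" using l by auto
  have ZbL: "line L Z b \<in> L" and ZcL: "line L Z c \<in> L" using line_in Zb by auto
  have bc: "b \<noteq> c" using cb line_B[OF Zb(1)] by auto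
  have ZbZc: "line L Z b \<noteq> line L Z c" using cb line_B[OF Zb(2)] by auto
  have lZb: "l \<noteq> line L Z b" "l \<noteq> line L Z c" using line_B Zb l(7,8) by auto
  have PbPc: "Pb \<noteq> Pc"
    using inter2[OF ZbL ZcL fb(2) _ line_A[OF Zb(1)] line_A[OF Zb(2)]] fc(2) fb(3) ZbZc by metis
  have lUA: "line L U A = l" using line_eq[of U A l] l AZ by auto
  have AUb: "A \<notin> line L U b" "A \<notin> line L U c" using not_on_line_Zb[of l U A] l AZ by auto
  have D1: "parallel L (line L b c) (line L Pb Pc)"
  proof (rule desargues[of b Pb U A c Pc])
    show "b \<noteq> Pb" "U \<noteq> A" "c \<noteq> Pc" "b \<noteq> U" "Pb \<noteq> A" "U \<noteq> c" "A \<noteq> Pc" "b \<noteq> c" "Pb \<noteq> Pc"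
      using fb fc l bc PbPc AZ by auto
    show "line L b Pb \<noteq> line L U A" "line L U A \<noteq> line L c Pc" "line L b Pb \<noteq> line L c Pc"
      using fb(13) fc(13) lUA lZb ZbZc by auto
    show "parallel L (line L b Pb) (line L U A) \<and> parallel L (line L U A) (line L c Pc) \<and>
          parallel L (line L b Pb) (line L c Pc) \<or>
          (\<exists>X. X \<in> line L b Pb \<and> X \<in> line L U A \<and> X \<in> line L c Pc)"
      using fb(13) fc(13) lUA l(2) line_A[OF Zb(1)] line_A[OF Zb(2)] by auto
    have e1: "line L Pb A = par_line L A (line L U b)" using fb(10) line_sym by metis
    have e2: "line L A Pc = par_line L A (line L U c)" using fc(10) .
    show "parallel L (line L b U) (line L Pb A)"
      using e1 line_sym[of L b U] par_sym[OF par_line_par[OF line_in[OF Zb(5)]]] by metis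
    show "parallel L (line L U c) (line L A Pc)"
      using e2 par_sym[OF par_line_par[OF line_in[OF Zb(6)]]] by metis
    show "line L b U \<noteq> line L Pb A"
      using e1 line_sym[of L b U] par_line_P[OF line_in[OF Zb(5)]] AUb by metis
    show "line L U c \<noteq> line L A Pc"
      using e2 par_line_P[OF line_in[OF Zb(6)]] AUb by metis
  qed
  have Rb_l: "line L B Rb = l" using line_eq[of B Rb l] fb l by auto
  have D2: "parallel L (line L c B) (line L Pc Rb)"
  proof (rule desargues[of c Pc b Pb B Rb])
    show "c \<noteq> Pc" "b \<noteq> Pb" "B \<noteq> Rb" "c \<noteq> b" "Pc \<noteq> Pb" "b \<noteq> B" "Pb \<noteq> Rb" "c \<noteq> B" "Pc \<noteq> Rb"
      using fb fc l bc PbPc by auto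
    show "line L c Pc \<noteq> line L b Pb" "line L b Pb \<noteq> line L B Rb" "line L c Pc \<noteq> line L B Rb"
      using fb(13) fc(13) Rb_l lZb ZbZc by auto
    show "parallel L (line L c Pc) (line L b Pb) \<and> parallel L (line L b Pb) (line L B Rb) \<and>
          parallel L (line L c Pc) (line L B Rb) \<or>
          (\<exists>X. X \<in> line L c Pc \<and> X \<in> line L b Pb \<and> X \<in> line L B Rb)"
      using fb(13) fc(13) Rb_l l(2) line_A[OF Zb(1)] line_A[OF Zb(2)] by auto
    show "parallel L (line L c b) (line L Pc Pb)" using D1 line_sym par_sym by metis
    show "parallel L (line L b B) (line L Pb Rb)"
      using fb(11) line_sym[of L b B] par_sym[OF par_line_par[OF line_in[OF Zb(3)]]] by metis
    have bcL: "line L b c \<in> L" using line_in[OF bc] .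
    have "line L b c \<noteq> line L Z b" using line_B[OF bc] cb by auto
    then have "Pb \<notin> line L b c" using inter2[OF bcL ZbL line_A[OF bc] line_B[OF Zb(1)]] fb(2,5) by blast
    then show "line L c b \<noteq> line L Pc Pb" using line_B[of Pc Pb] PbPc line_sym by metis
    have BbL: "line L B b \<in> L" using line_in[OF Zb(3)] .
    have "line L B b \<noteq> line L Z b"
      using inter2[OF l(1) ZbL l(5) _ l(2) line_A[OF Zb(1)]] line_A[OF Zb(3)] AZ(3) lZb by metis
    then have "Pb \<notin> line L B b" using inter2[OF BbL ZbL line_B[OF Zb(3)] line_B[OF Zb(1)]] fb(2,5) by blast
    then show "line L b B \<noteq> line L Pb Rb" using line_A[of Pb Rb] fb(4,6) line_sym by metis
  qed
  have PcRb: "Pc \<noteq> Rb" using fc(4) fb(6) by auto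
  have BcL: "line L B c \<in> L" using line_in[OF Zb(4)] .
  have "line L Pc Rb = par_line L Pc (line L B c)"
    using par_line_eq[OF BcL line_in[OF PcRb] line_A[OF PcRb]] D2 line_sym par_sym by metis
  then have "Rb \<in> par_line L Pc (line L B c)" using line_B[OF PcRb] by simp
  moreover note RF = R_facts[OF l(1,5,8), of Pc]
  ultimately have "meet l (par_line L Pc (line L B c)) = Rb"
    using meet_eq[OF l(1) par_line_in[OF BcL]] npar_ne[OF RF(1) l(1)] fb(6) by blast
  then show ?thesis using fc(12) Rb_def Rc_def by simp
qed

end


context dap
begin

lemma mulb_AZ:
  assumes l: "l \<in> L" "Z \<in> l" "U \<in> l" "B \<in> l" "Z \<noteq> U" "b \<notin> l"
  shows "mulb L l Z U b Z B = Z"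
proof -
  have Zb: "Z \<noteq> b" "U \<noteq> b" "B \<noteq> b" using l by auto
  note PP = mul_P[OF l(1,2,3,2,5,6)]
  have ne: "par_line L Z (line L U b) \<noteq> line L Z b" using PP(1) npar_ne par_line_in line_in Zb by metis
  have e1: "meet (par_line L Z (line L U b)) (line L Z b) = Z"
    using meet_eq[OF par_line_in[OF line_in[OF Zb(2)]] line_in[OF Zb(1)] ne
        par_line_P[OF line_in[OF Zb(2)]] line_A[OF Zb(1)]] .
  note RF = R_facts[OF l(1,4,6), of Z]
  have "meet l (par_line L Z (line L B b)) = Z"
    using meet_eq[OF l(1) par_line_in[OF line_in[OF Zb(3)]] npar_ne[OF RF(1) l(1)] l(2)
        par_line_P[OF line_in[OF Zb(3)]]] .
  then show ?thesis unfolding mulb_def e1 .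
qed

lemma mulb_AU:
  assumes l: "l \<in> L" "Z \<in> l" "U \<in> l" "B \<in> l" "Z \<noteq> U" "b \<notin> l"
  shows "mulb L l Z U b U B = B"
proof -
  have Zb: "Z \<noteq> b" "U \<noteq> b" "B \<noteq> b" using l by auto
  have UbL: "line L U b \<in> L" and ZbL: "line L Z b \<in> L" and BbL: "line L B b \<in> L" using line_in Zb by auto
  have e0: "par_line L U (line L U b) = line L U b"
    using par_line_eq[OF UbL UbL line_A[OF Zb(2)] par_refl[OF UbL]] .
  have UZb: "U \<notin> line L Z b" using not_on_line_Zb l by metis
  have ne: "line L U b \<noteq> line L Z b" using UZb line_A[OF Zb(2)] by auto
  have e1: "meet (line L U b) (line L Z b) = b"
    using meet_eq[OF UbL ZbL ne line_B[OF Zb(2)] line_B[OF Zb(1)]] .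
  have e2: "par_line L b (line L B b) = line L B b"
    using par_line_eq[OF BbL BbL line_B[OF Zb(3)] par_refl[OF BbL]] .
  have "l \<noteq> line L B b" using line_B[OF Zb(3)] l(6) by auto
  then have "meet l (line L B b) = B" using meet_eq[OF l(1) BbL _ l(4) line_A[OF Zb(3)]] by blast
  then show ?thesis unfolding mulb_def e0 e1 e2 .
qed

lemma mulb_BZ:
  assumes l: "l \<in> L" "Z \<in> l" "U \<in> l" "A \<in> l" "Z \<noteq> U" "b \<notin> l"
  shows "mulb L l Z U b A Z = Z"
proof -
  have Zb: "Z \<noteq> b" using l by auto
  have ZbL: "line L Z b \<in> L" using line_in Zb by auto
  note PP = mul_P[OF l]
  have e1: "par_line L (meet (par_line L A (line L U b)) (line L Z b)) (line L Z b) = line L Z b"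
    using par_line_eq[OF ZbL ZbL PP(3) par_refl[OF ZbL]] .
  have "l \<noteq> line L Z b" using line_B[OF Zb] l(6) by auto
  then have "meet l (line L Z b) = Z" using meet_eq[OF l(1) ZbL _ l(2) line_A[OF Zb]] by blast
  then show ?thesis unfolding mulb_def e1 .
qed

lemma mul_indep:
  assumes l: "l \<in> L" "Z \<in> l" "U \<in> l" "A \<in> l" "B \<in> l" "Z \<noteq> U" "b \<notin> l" "c \<notin> l"
  shows "mulb L l Z U b A B = mulb L l Z U c A B"
proof (cases "A = Z \<or> A = U \<or> B = Z")
  case True
  then show ?thesis using mulb_AZ mulb_AU mulb_BZ l by metis
next
  case False
  then have AZ: "A \<noteq> Z" "A \<noteq> U" "B \<noteq> Z" by auto
  show ?thesis
  proof (cases "c \<in> line L Z b")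
    case False
    then show ?thesis using mul_indep_nd l AZ by blast
  next
    case cb: True
    have Zb: "Z \<noteq> b" "U \<noteq> b" "Z \<noteq> c" using l by auto
    have UbL: "line L U b \<in> L" and ZbL: "line L Z b \<in> L" using line_in Zb by auto
    define n where "n = par_line L Z (line L U b)"
    have nL: "n \<in> L" using par_line_in[OF UbL] n_def by simp
    obtain W where W: "W \<in> n" "W \<noteq> Z" using ax_two[OF nL] by metis
    have Zn: "Z \<in> n" using par_line_P[OF UbL] n_def by simp
    have pn: "parallel L n (line L U b)" using par_line_par[OF UbL] n_def by simp
    have lUb: "l \<noteq> line L U b" using line_B[OF Zb(2)] l(7) by auto
    have UZb: "U \<notin> line L Z b" using not_on_line_Zb l by metis
    have Wl: "W \<notin> l"
    proof
      assume "W \<in> l"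
      then have "n = l" using inter2[OF nL l(1) W(1) _ Zn l(2)] W(2) by metis
      then show False using pn par_point_eq l(3) line_A[OF Zb(2)] lUb by metis
    qed
    have WZb: "W \<notin> line L Z b"
    proof
      assume "W \<in> line L Z b"
      then have "n = line L Z b" using inter2[OF nL ZbL W(1) _ Zn line_A[OF Zb(1)]] W(2) by metis
      then have "line L Z b = line L U b" using pn par_point_eq line_B[OF Zb(1)] line_B[OF Zb(2)] by metis
      then show False using UZb line_A[OF Zb(2)] by metis
    qed
    have e1: "mulb L l Z U b A B = mulb L l Z U W A B" using mul_indep_nd l AZ Wl WZb by blast
    have ZW: "Z \<noteq> W" using W by auto
    have "c \<notin> line L Z W"
    proof
      assume "c \<in> line L Z W"
      then have "line L Z W = line L Z b"
        using inter2[OF line_in[OF ZW] ZbL line_A[OF ZW] line_A[OF Zb(1)] _ cb] Zb(3) by metis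
      then show False using WZb line_B[OF ZW] by metis
    qed
    then have e2: "mulb L l Z U W A B = mulb L l Z U c A B" using mul_indep_nd l AZ Wl by blast
    show ?thesis using e1 e2 by simp
  qed
qed

end


context dap
begin

lemma exists_off: "l \<in> L \<Longrightarrow> \<exists>b. b \<notin> l"
  using ax_noncol unfolding collinear_def by blast

lemma some_off: "l \<in> L \<Longrightarrow> (SOME b. b \<notin> l) \<notin> l"
  using exists_off someI_ex by metis

lemma solve:
  assumes l: "l \<in> L" "P \<notin> l" "b \<notin> l" "T \<in> l"
  shows "\<exists>!Y. Y \<in> l \<and> meet l (par_line L P (line L Y b)) = T"
proof -
  have PT: "P \<noteq> T" using l by auto
  have PTL: "line L P T \<in> L" using line_in[OF PT] .
  have lPT: "l \<noteq> line L P T" using line_A[OF PT] l by auto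
  have np: "\<not> parallel L l (line L P T)" using npar_I[OF l(1) PTL lPT l(4) line_B[OF PT]] .
  define k where "k = par_line L b (line L P T)"
  have kL: "k \<in> L" and bk: "b \<in> k" and pk: "parallel L k (line L P T)"
    using par_line[OF PTL, of b] k_def by auto
  have npk: "\<not> parallel L l k" using npar_par2[OF np par_sym[OF pk]] .
  have lk: "l \<noteq> k" using npar_ne[OF npk l(1)] .
  define Y0 where "Y0 = meet l k"
  have Y0: "Y0 \<in> l" "Y0 \<in> k" using npar_meet[OF l(1) kL npk] Y0_def by auto
  have Y0b: "Y0 \<noteq> b" using Y0 l by auto
  have claim: "Y = Y0" if Y: "Y \<in> l" "meet l (par_line L P (line L Y b)) = T" for Y
  proof -
    have Yb: "Y \<noteq> b" using Y l by auto
    have YbL: "line L Y b \<in> L" using line_in[OF Yb] .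
    note RF = R_facts[OF l(1) Y(1) l(3), of P]
    have "T \<in> par_line L P (line L Y b)" using RF(3) Y(2) by simp
    then have "par_line L P (line L Y b) = line L P T"
      using line_eq[OF PT par_line_in[OF YbL] par_line_P[OF YbL]] by simp
    then have "parallel L (line L Y b) (line L P T)" using par_sym[OF par_line_par[OF YbL]] by metis
    then have "line L Y b = k" using par_line_eq[OF PTL YbL line_B[OF Yb]] k_def by simp
    then have "Y \<in> k" using line_A[OF Yb] by simp
    then show ?thesis using meet_eq[OF l(1) kL lk Y(1)] Y0_def by simp
  qed
  have "line L Y0 b = k" using line_eq[OF Y0b kL Y0(2) bk] .
  moreover have "par_line L P k = line L P T"
    using par_line_eq[OF kL PTL line_A[OF PT] par_sym[OF pk]] .
  moreover have "meet l (line L P T) = T" using meet_eq[OF l(1) PTL lPT l(4) line_B[OF PT]] .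
  ultimately have "Y0 \<in> l \<and> meet l (par_line L P (line L Y0 b)) = T" using Y0 by simp
  then show ?thesis using claim by blast
qed

lemma mul_P_off:
  assumes l: "l \<in> L" "Z \<in> l" "U \<in> l" "A \<in> l" "Z \<noteq> U" "b \<notin> l" "A \<noteq> Z"
  shows "meet (par_line L A (line L U b)) (line L Z b) \<notin> l"
proof -
  define P where "P = meet (par_line L A (line L U b)) (line L Z b)"
  have Zb: "Z \<noteq> b" "U \<noteq> b" using l by auto
  have ZbL: "line L Z b \<in> L" and UbL: "line L U b \<in> L" using line_in Zb by auto
  note P1 = mul_P[OF l(1-6), folded P_def]
  have lZb: "l \<noteq> line L Z b" using line_B[OF Zb(1)] l(6) by auto
  have lUb: "l \<noteq> line L U b" using line_B[OF Zb(2)] l(6) by auto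
  have PZ: "P \<noteq> Z"
  proof
    assume "P = Z"
    then have "par_line L A (line L U b) = l"
      using inter2[OF par_line_in[OF UbL] l(1) par_line_P[OF UbL] l(4) _ l(2)] P1 l(7) by metis
    then have "parallel L l (line L U b)" using par_line_par[OF UbL] by metis
    then show False using par_point_eq l(3) line_A[OF Zb(2)] lUb by blast
  qed
  show "P \<notin> l" using inter2[OF l(1) ZbL _ P1(3) l(2) line_A[OF Zb(1)]] PZ lZb P_def by blast
qed

lemma addb_inj1:
  assumes l: "l \<in> L" "Z \<in> l" "X \<in> l" "X' \<in> l" "W \<in> l" "b \<notin> l"
    and eq: "addb L l Z b X W = addb L l Z b X' W"
  shows "X = X'"
proof -
  have Zb: "Z \<noteq> b" "W \<noteq> b" using l by auto
  have ZbL: "line L Z b \<in> L" and WbL: "line L W b \<in> L" using line_in Zb by auto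
  define P where "P = meet (par_line L b l) (par_line L X (line L Z b))"
  define P' where "P' = meet (par_line L b l) (par_line L X' (line L Z b))"
  note PP = add_P[OF l(1,2,3,6), folded P_def]
  note PP' = add_P[OF l(1,2,4,6), folded P'_def]
  define R where "R = addb L l Z b X W"
  have R1: "R = meet l (par_line L P (line L W b))" "R = meet l (par_line L P' (line L W b))"
    using eq unfolding R_def addb_def P_def P'_def by auto
  note RF = R_facts[OF l(1,5,6), of P, folded R1(1)]
  note RF' = R_facts[OF l(1,5,6), of P', folded R1(2)]
  have "parallel L (par_line L P (line L W b)) (par_line L P' (line L W b))"
    using par_trans[OF par_line_par[OF WbL] par_sym[OF par_line_par[OF WbL]]] .
  then have k: "par_line L P (line L W b) = par_line L P' (line L W b)"
    using par_point_eq RF(3) RF'(3) by blast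
  have "par_line L P (line L W b) \<noteq> par_line L b l"
    using RF(1) par_line_par[OF l(1), of b] par_sym by metis
  then have PP'eq: "P = P'"
    using inter2[OF par_line_in[OF WbL] par_line_in[OF l(1)] par_line_P[OF WbL] PP(2) _ PP'(2)]
      k par_line_P[OF WbL, of P'] by metis
  have "parallel L (par_line L X (line L Z b)) (par_line L X' (line L Z b))"
    using par_trans[OF par_line_par[OF ZbL] par_sym[OF par_line_par[OF ZbL]]] .
  then have n: "par_line L X (line L Z b) = par_line L X' (line L Z b)"
    using par_point_eq PP(3) PP'(3) PP'eq by metis
  have "\<not> parallel L l (par_line L X (line L Z b))"
    using npar_par2[OF npar_line[OF l(1,2,6)] par_sym[OF par_line_par[OF ZbL]]] .
  then have "l \<noteq> par_line L X (line L Z b)" using npar_ne l(1) by blast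
  then show ?thesis
    using inter2[OF l(1) par_line_in[OF ZbL] l(3) par_line_P[OF ZbL] l(4)] n par_line_P[OF ZbL, of X'] by metis
qed

context
  fixes Z U :: 'p
  assumes ZU: "Z \<noteq> U"
begin

lemma lL: "line L Z U \<in> L" using line_in[OF ZU] .

lemma b0: "(SOME b. b \<notin> line L Z U) \<notin> line L Z U" using some_off[OF lL] .

lemma add_on_in: "X \<in> line L Z U \<Longrightarrow> Y \<in> line L Z U \<Longrightarrow> add_on L Z U X Y \<in> line L Z U"
  unfolding add_on_addb addb_def using R_facts(2)[OF lL _ b0] by blast

lemma mul_on_in: "X \<in> line L Z U \<Longrightarrow> Y \<in> line L Z U \<Longrightarrow> mul_on L Z U X Y \<in> line L Z U"
  unfolding mul_on_mulb mulb_def using R_facts(2)[OF lL _ b0] by blast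

lemma neg_ex: "X \<in> line L Z U \<Longrightarrow> \<exists>!Y. Y \<in> line L Z U \<and> add_on L Z U X Y = Z"
  unfolding add_on_addb addb_def
  by (rule solve[OF lL add_P(4)[OF lL line_A[OF ZU] _ b0] b0 line_A[OF ZU]])

lemma inv_ex: "X \<in> line L Z U \<Longrightarrow> X \<noteq> Z \<Longrightarrow> \<exists>!Y. Y \<in> line L Z U \<and> mul_on L Z U X Y = U"
  unfolding mul_on_mulb mulb_def
  by (rule solve[OF lL mul_P_off[OF lL line_A[OF ZU] line_B[OF ZU] _ ZU b0] b0 line_B[OF ZU]])

lemma neg: "X \<in> line L Z U \<Longrightarrow> neg_on L Z U X \<in> line L Z U \<and> add_on L Z U X (neg_on L Z U X) = Z"
  unfolding neg_on_def by (rule theI'[OF neg_ex])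

lemma inv: "X \<in> line L Z U \<Longrightarrow> X \<noteq> Z \<Longrightarrow> inv_on L Z U X \<in> line L Z U \<and> mul_on L Z U X (inv_on L Z U X) = U"
  unfolding inv_on_def by (rule theI'[OF inv_ex])

lemma sub_in: "X \<in> line L Z U \<Longrightarrow> Y \<in> line L Z U \<Longrightarrow> sub_on L Z U X Y \<in> line L Z U"
  unfolding sub_on_def using add_on_in neg by blast

lemma sub_nz: "X \<in> line L Z U \<Longrightarrow> Y \<in> line L Z U \<Longrightarrow> X \<noteq> Y \<Longrightarrow> sub_on L Z U X Y \<noteq> Z"
proof
  assume a: "X \<in> line L Z U" "Y \<in> line L Z U" "X \<noteq> Y" "sub_on L Z U X Y = Z"
  note N = neg[OF a(2)]
  have "add_on L Z U X (neg_on L Z U Y) = add_on L Z U Y (neg_on L Z U Y)"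
    using a(4) N unfolding sub_on_def by simp
  then have "X = Y" unfolding add_on_addb
    using addb_inj1[OF lL line_A[OF ZU] a(1,2) _ b0] N by blast
  then show False using a by simp
qed

end

end


context dap
begin

context
  fixes \<phi> :: "'p \<Rightarrow> 'p"
  assumes col: "collineation L \<phi>"
begin

lemma c_inj: "inj \<phi>" using col unfolding collineation_def by (simp add: bij_is_inj)

lemma c_L: "l \<in> L \<Longrightarrow> \<phi> ` l \<in> L" using col unfolding collineation_def by blast

lemma c_mem: "\<phi> x \<in> \<phi> ` l \<longleftrightarrow> x \<in> l" using c_inj by (simp add: inj_image_mem_iff)

lemma c_line: "A \<noteq> B \<Longrightarrow> \<phi> ` line L A B = line L (\<phi> A) (\<phi> B)"
proof -
  assume AB: "A \<noteq> B"
  have "\<phi> A \<noteq> \<phi> B" using AB c_inj by (simp add: inj_eq)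
  then show ?thesis using line_eq[of "\<phi> A" "\<phi> B" "\<phi> ` line L A B"] c_L line AB by blast
qed

lemma c_par: "l \<in> L \<Longrightarrow> m \<in> L \<Longrightarrow> parallel L (\<phi> ` l) (\<phi> ` m) \<longleftrightarrow> parallel L l m"
  unfolding parallel_def using c_L c_inj
  by (simp add: inj_image_eq_iff image_Int[symmetric])

lemma c_par_line: "m \<in> L \<Longrightarrow> \<phi> ` par_line L P m = par_line L (\<phi> P) (\<phi> ` m)"
  using par_line_eq[OF c_L c_L, of m "par_line L P m" "\<phi> P"] par_line[of m P] c_par par_line_in c_mem
  by metis

lemma c_meet: "l \<in> L \<Longrightarrow> m \<in> L \<Longrightarrow> \<not> parallel L l m \<Longrightarrow> \<phi> (meet l m) = meet (\<phi> ` l) (\<phi> ` m)"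
  using meet_eq[OF c_L c_L, of l m "\<phi> (meet l m)"] npar_meet[of l m] c_par[of l m] npar_ne[of "\<phi> ` l" "\<phi> ` m"] c_L
  by (metis c_mem)

lemma c_addb:
  assumes l: "l \<in> L" "Z \<in> l" "A \<in> l" "B \<in> l" "b \<notin> l"
  shows "\<phi> (addb L l Z b A B) = addb L (\<phi> ` l) (\<phi> Z) (\<phi> b) (\<phi> A) (\<phi> B)"
proof -
  have Zb: "Z \<noteq> b" "B \<noteq> b" using l by auto
  have ZbL: "line L Z b \<in> L" and BbL: "line L B b \<in> L" using line_in Zb by auto
  define P where "P = meet (par_line L b l) (par_line L A (line L Z b))"
  note PP = add_P[OF l(1,2,3,5)]
  have e1: "\<phi> P = meet (par_line L (\<phi> b) (\<phi> ` l)) (par_line L (\<phi> A) (line L (\<phi> Z) (\<phi> b)))"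
    unfolding P_def using c_meet[OF par_line_in[OF l(1)] par_line_in[OF ZbL] PP(1)]
      c_par_line[OF l(1)] c_par_line[OF ZbL] c_line[OF Zb(1)] by simp
  note RF = R_facts[OF l(1,4,5), of P]
  have "\<phi> (addb L l Z b A B) = meet (\<phi> ` l) (\<phi> ` par_line L P (line L B b))"
    unfolding addb_def P_def[symmetric] using c_meet[OF l(1) par_line_in[OF BbL] RF(1)] .
  also have "\<dots> = meet (\<phi> ` l) (par_line L (\<phi> P) (line L (\<phi> B) (\<phi> b)))"
    using c_par_line[OF BbL] c_line[OF Zb(2)] by simp
  finally show ?thesis unfolding e1 addb_def .
qed

lemma c_mulb:
  assumes l: "l \<in> L" "Z \<in> l" "U \<in> l" "A \<in> l" "B \<in> l" "Z \<noteq> U" "b \<notin> l"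
  shows "\<phi> (mulb L l Z U b A B) = mulb L (\<phi> ` l) (\<phi> Z) (\<phi> U) (\<phi> b) (\<phi> A) (\<phi> B)"
proof -
  have Zb: "Z \<noteq> b" "B \<noteq> b" "U \<noteq> b" using l by auto
  have ZbL: "line L Z b \<in> L" and BbL: "line L B b \<in> L" and UbL: "line L U b \<in> L" using line_in Zb by auto
  define P where "P = meet (par_line L A (line L U b)) (line L Z b)"
  note PP = mul_P[OF l(1,2,3,4,6,7)]
  have e1: "\<phi> P = meet (par_line L (\<phi> A) (line L (\<phi> U) (\<phi> b))) (line L (\<phi> Z) (\<phi> b))"
    unfolding P_def using c_meet[OF par_line_in[OF UbL] ZbL PP(1)]
      c_par_line[OF UbL] c_line[OF Zb(1)] c_line[OF Zb(3)] by simp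
  note RF = R_facts[OF l(1,5,7), of P]
  have "\<phi> (mulb L l Z U b A B) = meet (\<phi> ` l) (\<phi> ` par_line L P (line L B b))"
    unfolding mulb_def P_def[symmetric] using c_meet[OF l(1) par_line_in[OF BbL] RF(1)] .
  also have "\<dots> = meet (\<phi> ` l) (par_line L (\<phi> P) (line L (\<phi> B) (\<phi> b)))"
    using c_par_line[OF BbL] c_line[OF Zb(2)] by simp
  finally show ?thesis unfolding e1 mulb_def .
qed

context
  fixes Z U :: 'p
  assumes ZU: "Z \<noteq> U"
begin

lemma ZU': "\<phi> Z \<noteq> \<phi> U" using ZU c_inj by (simp add: inj_eq)

lemma img_l: "\<phi> ` line L Z U = line L (\<phi> Z) (\<phi> U)" using c_line[OF ZU] .

lemma img_in: "X \<in> line L Z U \<Longrightarrow> \<phi> X \<in> line L (\<phi> Z) (\<phi> U)"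
  using img_l by blast

lemma T_add: "X \<in> line L Z U \<Longrightarrow> Y \<in> line L Z U \<Longrightarrow>
    \<phi> (add_on L Z U X Y) = add_on L (\<phi> Z) (\<phi> U) (\<phi> X) (\<phi> Y)"
proof -
  assume XY: "X \<in> line L Z U" "Y \<in> line L Z U"
  have b: "\<phi> (SOME b. b \<notin> line L Z U) \<notin> line L (\<phi> Z) (\<phi> U)"
    using b0[OF ZU] img_l c_mem by metis
  show ?thesis
    unfolding add_on_addb c_addb[OF lL[OF ZU] line_A[OF ZU] XY b0[OF ZU]] img_l
    by (rule add_indep[OF lL[OF ZU'] line_A[OF ZU'] img_in[OF XY(1)] img_in[OF XY(2)] b b0[OF ZU']])
qed

lemma T_mul: "X \<in> line L Z U \<Longrightarrow> Y \<in> line L Z U \<Longrightarrow>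
    \<phi> (mul_on L Z U X Y) = mul_on L (\<phi> Z) (\<phi> U) (\<phi> X) (\<phi> Y)"
proof -
  assume XY: "X \<in> line L Z U" "Y \<in> line L Z U"
  have b: "\<phi> (SOME b. b \<notin> line L Z U) \<notin> line L (\<phi> Z) (\<phi> U)"
    using b0[OF ZU] img_l c_mem by metis
  show ?thesis
    unfolding mul_on_mulb c_mulb[OF lL[OF ZU] line_A[OF ZU] line_B[OF ZU] XY ZU b0[OF ZU]] img_l
    by (rule mul_indep[OF lL[OF ZU'] line_A[OF ZU'] line_B[OF ZU'] img_in[OF XY(1)] img_in[OF XY(2)] ZU' b b0[OF ZU']])
qed

lemma T_neg: "X \<in> line L Z U \<Longrightarrow> \<phi> (neg_on L Z U X) = neg_on L (\<phi> Z) (\<phi> U) (\<phi> X)"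
proof -
  assume X: "X \<in> line L Z U"
  note N = neg[OF ZU X]
  have "\<phi> (neg_on L Z U X) \<in> line L (\<phi> Z) (\<phi> U) \<and>
        add_on L (\<phi> Z) (\<phi> U) (\<phi> X) (\<phi> (neg_on L Z U X)) = \<phi> Z"
    using img_in N T_add[OF X] by metis
  then show ?thesis unfolding neg_on_def[of L "\<phi> Z"]
    using the1_equality[OF neg_ex[OF ZU' img_in[OF X]]] by metis
qed

lemma T_inv: "X \<in> line L Z U \<Longrightarrow> X \<noteq> Z \<Longrightarrow> \<phi> (inv_on L Z U X) = inv_on L (\<phi> Z) (\<phi> U) (\<phi> X)"
proof -
  assume X: "X \<in> line L Z U" "X \<noteq> Z"
  have X': "\<phi> X \<noteq> \<phi> Z" using X c_inj by (simp add: inj_eq)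
  note N = inv[OF ZU X]
  have "\<phi> (inv_on L Z U X) \<in> line L (\<phi> Z) (\<phi> U) \<and>
        mul_on L (\<phi> Z) (\<phi> U) (\<phi> X) (\<phi> (inv_on L Z U X)) = \<phi> U"
    using img_in N T_mul[OF X(1)] by metis
  then show ?thesis unfolding inv_on_def[of L "\<phi> Z"]
    using the1_equality[OF inv_ex[OF ZU' img_in[OF X(1)] X']] by metis
qed

lemma T_sub: "X \<in> line L Z U \<Longrightarrow> Y \<in> line L Z U \<Longrightarrow>
    \<phi> (sub_on L Z U X Y) = sub_on L (\<phi> Z) (\<phi> U) (\<phi> X) (\<phi> Y)"
  unfolding sub_on_def using T_add T_neg neg[OF ZU] by metis

lemma T_ratio:
  assumes "A \<in> line L Z U" "B \<in> line L Z U" "C \<in> line L Z U" "B \<noteq> C"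
  shows "\<phi> (ratio L Z U A B C) = ratio L (\<phi> Z) (\<phi> U) (\<phi> A) (\<phi> B) (\<phi> C)"
proof -
  have s1: "sub_on L Z U B C \<in> line L Z U" "sub_on L Z U B C \<noteq> Z"
    using sub_in[OF ZU] sub_nz[OF ZU] assms by auto
  have s2: "sub_on L Z U A C \<in> line L Z U" using sub_in[OF ZU] assms by auto
  have i1: "inv_on L Z U (sub_on L Z U B C) \<in> line L Z U" using inv[OF ZU s1] by blast
  show ?thesis unfolding ratio_def
    using T_mul[OF i1 s2] T_inv[OF s1] T_sub assms by metis
qed

end
end
end

theorem mainTheorem11:
  fixes L :: "'p set set" and \<phi> :: "'p \<Rightarrow> 'p" and Z U A B C :: 'p
  assumes "desargues_affine_plane L"
    and "Z \<noteq> U"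
    and "translation L \<phi>"
    and "A \<in> line L Z U" and "B \<in> line L Z U" and "C \<in> line L Z U"
    and "B \<noteq> C"
  shows "\<phi> (ratio L Z U A B C) = ratio L (\<phi> Z) (\<phi> U) (\<phi> A) (\<phi> B) (\<phi> C)"
proof -
  interpret dap L by unfold_locales (rule assms(1))
  have "collineation L \<phi>"
    using assms(3) unfolding translation_def dilatation_def collineation_def by auto
  then show ?thesis using T_ratio assms by blast
qed


end
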